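(* Let $V_1,V_2,U,\tilde V_1,\tilde V_2,\tilde U\in\mathbb{R}[x]$ and $\alpha,\beta\in\mathbb{R}$ with $\alpha\ne0$, and let $m_1,m_2,\tilde m_1,\tilde m_2\ge3$ be integers with $\gcd(m_1,m_2)=1$ and $\gcd(\tilde m_1,\tilde m_2)=1$. Suppose that $$V_1\circ T_{m_1}+V_2\circ T_{m_2}=\tilde U\circ T_{\tilde m_1\tilde m_2}\circ(\alpha x+\beta)$$ and $$\tilde V_1\circ T_{\tilde m_1}\circ(\alpha x+\beta)+\tilde V_2\circ T_{\tilde m_2}\circ(\alpha x+\beta)=U\circ T_{m_1m_2},$$ where both sides of each equality are non-constant polynomials. Then $\alpha=\pm1$ and $\beta=0$.
   Context: $T_k$ denotes the Chebyshev polynomial of the first kind of degree $k$, $T_k(\cos\phi)=\cos(k\phi)$. $\circ$ denotes composition of polynomials. *)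

theory Defs
  imports "HOL-Computational_Algebra.Polynomial"
begin

fun cheb_T :: "nat \<Rightarrow> real poly" where
  "cheb_T 0 = 1"
| "cheb_T (Suc 0) = [:0, 1:]"
| "cheb_T (Suc (Suc n)) = [:0, 2:] * cheb_T (Suc n) - cheb_T n"

end

theory Submission imports Defs begin
lemma cheb_z:
  fixes z :: real assumes "z \<noteq> 0"
  shows "poly (cheb_T n) ((z + inverse z)/2) = (z^n + inverse z ^ n)/2"
proof (induction n rule: cheb_T.induct)
  case 1 then show ?case by simp
next
  case 2 then show ?case by simp
next
  case (3 n)
  have e: "inverse z * z = 1" using assms by simp
  have "poly (cheb_T (Suc (Suc n))) ((z + inverse z)/2) = (z + inverse z) * ((z ^ Suc n + inverse z ^ Suc n) / 2) - (z ^ n + inverse z ^ n) / 2"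
    by (simp only: cheb_T.simps poly_diff poly_mult 3) simp
  also have "\<dots> = (z ^ Suc (Suc n) + inverse z ^ Suc (Suc n))/2"
    using assms by (simp add: field_simps power_Suc)
  finally show ?case .
qed

lemma cheb_deg: "degree (cheb_T n) = n \<and> coeff (cheb_T n) n = (if n = 0 then 1 else 2^(n-1))"
proof (induction n rule: cheb_T.induct)
  case 1 then show ?case by simp
next
  case 2 then show ?case by simp
next
  case (3 n)
  have A: "[:0, 2:] * cheb_T (Suc n) = pCons 0 (smult 2 (cheb_T (Suc n)))" by simp
  have nz: "cheb_T (Suc n) \<noteq> 0" using 3 by (metis coeff_0 power_not_zero zero_neq_numeral Suc_neq_Zero)
  have dA: "degree ([:0, 2:] * cheb_T (Suc n)) = Suc (Suc n)"
    using 3 nz by (simp only: A) (auto simp: degree_pCons_eq)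
  have d: "degree (cheb_T (Suc (Suc n))) = Suc (Suc n)"
  proof -
    have "cheb_T (Suc (Suc n)) = [:0, 2:] * cheb_T (Suc n) + (- cheb_T n)" by simp
    also have "degree \<dots> = Suc (Suc n)" using 3 dA by (subst degree_add_eq_left) auto
    finally show ?thesis .
  qed
  have c: "coeff (cheb_T (Suc (Suc n))) (Suc (Suc n)) = 2 * coeff (cheb_T (Suc n)) (Suc n)"
    using 3 by (simp add: A coeff_eq_0)
  show ?case using d c 3 by simp
qed

lemma degree_cheb[simp]: "degree (cheb_T n) = n" using cheb_deg by blast
lemma lead_cheb: "lead_coeff (cheb_T n) = (if n = 0 then 1 else 2^(n-1))" using cheb_deg by simp
lemma cheb_nz[simp]: "cheb_T n \<noteq> 0" using lead_cheb[of n] by (auto split: if_splits)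

lemma poly_eq_infinite:
  fixes p q :: "real poly"
  assumes "infinite S" "\<And>x. x \<in> S \<Longrightarrow> poly p x = poly q x"
  shows "p = q"
proof (rule ccontr)
  assume "p \<noteq> q"
  then have "finite {x. poly (p - q) x = 0}" by (intro poly_roots_finite) simp
  moreover have "S \<subseteq> {x. poly (p - q) x = 0}" using assms(2) by auto
  ultimately show False using assms(1) finite_subset by blast
qed

lemma cheb_comp: "cheb_T (m * n) = pcompose (cheb_T m) (cheb_T n)"
proof (rule poly_eq_infinite[OF infinite_Ici[of 1]])
  fix x :: real assume "x \<in> {1..}"
  then have x: "x \<ge> 1" by simp
  define z where "z = x + sqrt (x^2 - 1)"
  have zpos: "z > 0" using x by (simp add: z_def add_pos_nonneg)
  have "z * (x - sqrt (x^2 - 1)) = x^2 - (sqrt (x^2-1))^2" by (simp add: z_def algebra_simps power2_eq_square)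
  also have "\<dots> = 1" using x by simp
  finally have iz: "inverse z = x - sqrt (x^2 - 1)" using zpos by (simp add: field_simps)
  have xz: "x = (z + inverse z)/2" unfolding iz by (simp add: z_def)
  have "poly (cheb_T (m*n)) x = (z^(m*n) + inverse z ^ (m*n))/2" using cheb_z[of z "m*n"] zpos by (simp only: xz[symmetric])
  moreover have "poly (pcompose (cheb_T m) (cheb_T n)) x = (z^(m*n) + inverse z ^ (m*n))/2"
  proof -
    have h: "poly (cheb_T n) x = (z^n + inverse (z^n))/2" using cheb_z[of z n] zpos by (simp only: xz[symmetric] power_inverse)
    show ?thesis unfolding poly_pcompose h using cheb_z[of "z^n" m] zpos
      by (simp add: power_mult[symmetric] power_inverse mult.commute)
  qed
  ultimately show "poly (cheb_T (m*n)) x = poly (pcompose (cheb_T m) (cheb_T n)) x" by simp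
qed

definition Hz :: "nat \<Rightarrow> real poly \<Rightarrow> real poly" where
  "Hz D f = (\<Sum>i\<le>D. smult (coeff f i) (monom 1 (D - i) * [:1/2, 0, 1/2:]^i))"

lemma Hz_add: "Hz D (f + g) = Hz D f + Hz D g"
  by (simp add: Hz_def sum.distrib smult_add_left)
lemma Hz_smult: "Hz D (smult c f) = smult c (Hz D f)"
  by (rule poly_eqI) (simp add: Hz_def coeff_sum sum_distrib_left mult.assoc)

lemma poly_sum_le:
  fixes f :: "real poly" assumes "degree f \<le> D"
  shows "poly f x = (\<Sum>i\<le>D. coeff f i * x^i)"
  unfolding poly_altdef
  by (rule sum.mono_neutral_left) (use assms in \<open>auto simp: coeff_eq_0\<close>)

lemma Hz_poly:
  assumes "degree f \<le> D" "z \<noteq> 0"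
  shows "poly (Hz D f) z = z^D * poly f ((z + inverse z)/2)"
proof -
  have q: "poly [:1/2, 0, 1/2:] z = z * ((z + inverse z)/2)"
    using assms(2) by (simp add: field_simps)
  have "poly (Hz D f) z = (\<Sum>i\<le>D. coeff f i * (z^(D-i) * (z * ((z + inverse z)/2))^i))"
    unfolding Hz_def poly_sum by (simp only: poly_smult poly_mult poly_monom poly_power q mult_1)
  also have "\<dots> = (\<Sum>i\<le>D. z^D * (coeff f i * ((z + inverse z)/2)^i))"
  proof (rule sum.cong)
    fix i assume "i \<in> {..D}"
    then have iD: "i \<le> D" by simp
    have "z^D = z^(D-i) * z^i" using iD by (simp add: power_add[symmetric])
    then show "coeff f i * (z^(D-i) * (z * ((z + inverse z)/2))^i) = z^D * (coeff f i * ((z + inverse z)/2)^i)"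
      by (simp only: power_mult_distrib mult_ac)
  qed simp
  also have "\<dots> = z^D * poly f ((z + inverse z)/2)"
    by (simp add: poly_sum_le[OF assms(1)] sum_distrib_left)
  finally show ?thesis .
qed

lemma Hz_low:
  assumes "k + degree f < D"
  shows "coeff (Hz D f) k = 0"
  unfolding Hz_def coeff_sum
proof (rule sum.neutral, intro ballI)
  fix i assume "i \<in> {..D}"
  show "coeff (smult (coeff f i) (monom 1 (D - i) * [:1/2, 0, 1/2:] ^ i)) k = 0"
  proof (cases "i \<le> degree f")
    case True
    then have "k < D - i" using assms by linarith
    then show ?thesis by (simp add: coeff_monom_mult)
  next
    case False then show ?thesis by (simp add: coeff_eq_0)
  qed
qed

lemma poly_eq_pos:
  fixes p q :: "real poly"
  assumes "\<And>z. z > 0 \<Longrightarrow> poly p z = poly q z"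
  shows "p = q"
  using poly_eq_infinite[OF infinite_Ioi[of 0]] assms by auto

lemma Hz_cheb:
  assumes "D = m * E" "degree V \<le> E"
  shows "Hz D (pcompose V (cheb_T m)) = pcompose (Hz E V) (monom 1 m)"
proof (rule poly_eq_pos)
  fix z :: real assume z: "z > 0"
  have dg: "degree (pcompose V (cheb_T m)) \<le> D"
    using assms by (simp add: degree_pcompose mult.commute)
  have "poly (Hz D (pcompose V (cheb_T m))) z = z^D * poly V ((z^m + inverse z ^ m)/2)"
    using Hz_poly[OF dg, of z] z cheb_z[of z m] by (simp only: poly_pcompose)
  also have "\<dots> = (z^m)^E * poly V ((z^m + inverse (z^m))/2)"
    by (simp add: assms(1) power_mult power_inverse)
  also have "\<dots> = poly (pcompose (Hz E V) (monom 1 m)) z"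
    using Hz_poly[OF assms(2), of "z^m"] z by (simp add: poly_pcompose poly_monom)
  finally show "poly (Hz D (pcompose V (cheb_T m))) z = poly (pcompose (Hz E V) (monom 1 m)) z" .
qed

lemma coeff_pcompose_monom:
  assumes "\<not> m dvd k"
  shows "coeff (pcompose q (monom 1 m)) k = 0"
  using assms
proof (induction q arbitrary: k rule: pCons_induct)
  case 0 then show ?case by simp
next
  case (pCons c q)
  have k0: "k \<noteq> 0" using pCons.prems by (metis dvd_0_right)
  show ?case
  proof (cases "k < m")
    case True
    then show ?thesis using k0 by (simp add: pcompose_pCons coeff_monom_mult coeff_pCons split: nat.splits)
  next
    case False
    then have "\<not> m dvd (k - m)" using pCons.prems by (metis dvd_minus_self)
    then show ?thesis using False k0 pCons.IH by (simp add: pcompose_pCons coeff_monom_mult coeff_pCons split: nat.splits)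
  qed
qed

fun Gp :: "real \<Rightarrow> real \<Rightarrow> nat \<Rightarrow> real poly" where
  "Gp a b 0 = 1"
| "Gp a b (Suc 0) = [:a/2, b, a/2:]"
| "Gp a b (Suc (Suc n)) = [:a, 2*b, a:] * Gp a b (Suc n) - [:0, 0, 1:] * Gp a b n"

lemma Gp_poly:
  assumes "z \<noteq> 0"
  shows "poly (Gp a b n) z = z^n * poly (cheb_T n) (a * ((z + inverse z)/2) + b)"
proof (induction n rule: cheb_T.induct)
  case 1 then show ?case by simp
next
  case 2 then show ?case using assms by (simp add: field_simps)
next
  case (3 n)
  define w where "w = a * ((z + inverse z)/2) + b"
  have e: "a + 2*b*z + a*z^2 = 2 * z * w" using assms by (simp add: w_def field_simps power2_eq_square)
  have "poly (Gp a b (Suc (Suc n))) z = (a + 2*b*z + a*z^2) * (z^Suc n * poly (cheb_T (Suc n)) w) - z^2 * (z^n * poly (cheb_T n) w)"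
    by (simp only: Gp.simps poly_diff poly_mult 3[folded w_def]) (simp add: power2_eq_square algebra_simps)
  also have "\<dots> = z^Suc (Suc n) * poly (cheb_T (Suc (Suc n))) w"
    by (simp only: e) (simp add: algebra_simps power2_eq_square)
  finally show ?case by (simp add: w_def)
qed

lemma Hz_G:
  assumes "n \<le> D"
  shows "Hz D (pcompose (cheb_T n) [:b, a:]) = monom 1 (D - n) * Gp a b n"
proof (rule poly_eq_pos)
  fix z :: real assume z: "z > 0"
  have dg: "degree (pcompose (cheb_T n) [:b, a:]) \<le> D"
    using assms degree_pcompose_le[of "cheb_T n" "[:b,a:]"] by (simp split: if_splits)
  have "poly (Hz D (pcompose (cheb_T n) [:b, a:])) z = z^(D-n) * (z^n * poly (cheb_T n) (a * ((z + inverse z)/2) + b))"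
    using Hz_poly[OF dg] z assms by (simp add: poly_pcompose power_add[symmetric] algebra_simps)
  then show "poly (Hz D (pcompose (cheb_T n) [:b, a:])) z = poly (monom 1 (D - n) * Gp a b n) z"
    using Gp_poly[of z a b n] z by (simp add: poly_monom)
qed
lemma Gp_rec:
  "coeff (Gp a b (Suc (Suc n))) 0 = a * coeff (Gp a b (Suc n)) 0"
  "coeff (Gp a b (Suc (Suc n))) (Suc j) = a * coeff (Gp a b (Suc n)) (Suc j) + 2*b*coeff (Gp a b (Suc n)) j
      + (case j of 0 \<Rightarrow> 0 | Suc i \<Rightarrow> a * coeff (Gp a b (Suc n)) i - coeff (Gp a b n) i)"
  by (auto simp: coeff_pCons split: nat.splits)

lemma c0: "coeff (Gp a b (Suc n)) 0 = a^(Suc n)/2"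
  by (induction n) (auto simp: Gp_rec)

lemma c1: "coeff (Gp a b (Suc n)) 1 = real (Suc n) * a^n * b"
proof (induction n)
  case 0 then show ?case by simp
next
  case (Suc n)
  show ?case using Gp_rec(2)[of a b n 0] Suc c0[of a b n] by (simp add: algebra_simps)
qed

lemma c2: "2 * a^2 * coeff (Gp a b (Suc (Suc n))) 2 = real (n+2) * a^(n+2) * (a^2 - 1 + 2 * real (n+1) * b^2)"
proof (induction n)
  case 0 then show ?case by (simp add: algebra_simps power2_eq_square numeral_2_eq_2)
next
  case (Suc n)
  have r: "coeff (Gp a b (Suc (Suc (Suc n)))) 2 = a * coeff (Gp a b (Suc (Suc n))) 2 + 2*b*coeff (Gp a b (Suc (Suc n))) 1
      + (a * coeff (Gp a b (Suc (Suc n))) 0 - coeff (Gp a b (Suc n)) 0)"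
    using Gp_rec(2)[of a b "Suc n" 1] by (simp add: numeral_2_eq_2)
  have "2 * a^2 * coeff (Gp a b (Suc (Suc (Suc n)))) 2 = a * (2 * a^2 * coeff (Gp a b (Suc (Suc n))) 2)
     + 2*a^2*(2*b*coeff (Gp a b (Suc (Suc n))) 1 + (a * coeff (Gp a b (Suc (Suc n))) 0 - coeff (Gp a b (Suc n)) 0))"
    unfolding r by (simp only: algebra_simps)
  also have "\<dots> = real (Suc n+2) * a^(Suc n+2) * (a^2 - 1 + 2 * real (Suc n+1) * b^2)"
    unfolding Suc.IH c0 c1 by (simp add: algebra_simps power2_eq_square)
  finally show ?case .
qed

lemma c2z: "2 * a^2 * coeff (Gp a 0 (Suc (Suc n))) 2 = real (n+2) * a^(n+2) * (a^2 - 1)"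
  using c2[of a 0 n] by simp

lemma c4: "4 * a^4 * coeff (Gp a 0 (Suc (Suc (Suc n)))) 4 = real (n+3) * a^(n+3) * (a^2-1) * (2 + real (n+2) * (a^2-1))"
proof (induction n)
  case 0 then show ?case by (simp add: numeral_eq_Suc algebra_simps power2_eq_square)
next
  case (Suc n)
  have r: "coeff (Gp a 0 (Suc (Suc (Suc (Suc n))))) 4 = a * coeff (Gp a 0 (Suc (Suc (Suc n)))) 4
      + (a * coeff (Gp a 0 (Suc (Suc (Suc n)))) 2 - coeff (Gp a 0 (Suc (Suc n))) 2)"
    using Gp_rec(2)[of a 0 "Suc (Suc n)" 3] by (simp add: numeral_eq_Suc)
  have "4 * a^4 * coeff (Gp a 0 (Suc (Suc (Suc (Suc n))))) 4 = a * (4 * a^4 * coeff (Gp a 0 (Suc (Suc (Suc n)))) 4)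
     + 2*a^2*(a * (2 * a^2 * coeff (Gp a 0 (Suc (Suc (Suc n)))) 2) - 2 * a^2 * coeff (Gp a 0 (Suc (Suc n))) 2)"
    unfolding r by algebra
  also have "\<dots> = real (Suc n+3) * a^(Suc n+3) * (a^2-1) * (2 + real (Suc n+2) * (a^2-1))"
    unfolding Suc.IH c2z[of a n] c2z[of a "Suc n"] by (simp add: algebra_simps power2_eq_square power_add eval_nat_numeral)
  finally show ?case .
qed

lemma c6: "12 * a^6 * coeff (Gp a 0 (Suc (Suc (Suc (Suc n))))) 6 = real (n+4) * a^(n+4) * (a^2-1)
   * (6 + 6 * real (n+2) * (a^2-1) + real (n+3) * real (n+2) * (a^2-1)^2)"
proof (induction n)
  case 0 then show ?case by (simp add: numeral_eq_Suc algebra_simps power2_eq_square)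
next
  case (Suc n)
  have r: "coeff (Gp a 0 (Suc (Suc (Suc (Suc (Suc n)))))) 6 = a * coeff (Gp a 0 (Suc (Suc (Suc (Suc n))))) 6
      + (a * coeff (Gp a 0 (Suc (Suc (Suc (Suc n))))) 4 - coeff (Gp a 0 (Suc (Suc (Suc n)))) 4)"
    using Gp_rec(2)[of a 0 "Suc (Suc (Suc n))" 5] by (simp add: numeral_eq_Suc)
  have "12 * a^6 * coeff (Gp a 0 (Suc (Suc (Suc (Suc (Suc n)))))) 6 = a * (12 * a^6 * coeff (Gp a 0 (Suc (Suc (Suc (Suc n))))) 6)
     + 3*a^2*(a * (4 * a^4 * coeff (Gp a 0 (Suc (Suc (Suc (Suc n))))) 4) - 4 * a^4 * coeff (Gp a 0 (Suc (Suc (Suc n)))) 4)"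
    unfolding r by algebra
  also have "\<dots> = real (Suc n+4) * a^(Suc n+4) * (a^2-1)
   * (6 + 6 * real (Suc n+2) * (a^2-1) + real (Suc n+3) * real (Suc n+2) * (a^2-1)^2)"
    unfolding Suc.IH c4[of a n] c4[of a "Suc n"] by (simp add: algebra_simps power2_eq_square power_add eval_nat_numeral)
  finally show ?case .
qed

lemma dvd_close:
  fixes m x y :: nat
  assumes "m dvd x" "m dvd y" "y < x" "x - y < m"
  shows False
proof -
  have "m dvd x - y" using assms(1,2) by (rule dvd_diff_nat)
  then have "m \<le> x - y" using assms(3) by (intro dvd_imp_le) auto
  then show False using assms(4) by simp
qed

lemma dvd_close2:
  fixes m y d :: nat
  assumes "m dvd y + d" "m dvd y" "0 < d" "d < m"
  shows False
proof -
  have "m dvd (y + d) - y" using assms(1,2) by (rule dvd_diff_nat)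
  then have "m dvd d" by simp
  then show False using assms(3,4) nat_dvd_not_less by blast
qed

lemma three_consec:
  fixes m1 m2 n :: nat
  assumes "m1 \<ge> 3" "m2 \<ge> 3" "n \<ge> 2"
    and "m1 dvd n \<or> m2 dvd n" "m1 dvd (n-1) \<or> m2 dvd (n-1)" "m1 dvd (n-2) \<or> m2 dvd (n-2)"
  shows False
proof -
  obtain k where k: "n = k + 2" using assms(3) by (metis le_add_diff_inverse2)
  have e: "n - 1 = k + 1" "n - 2 = k" "n = (k+1) + 1" "n = k + 2" "k + 1 = k + 1" using k by auto
  show False using assms(4-6) unfolding e(1,2)
    using dvd_close2[of m1 "k+1" 1] dvd_close2[of m1 k 2] dvd_close2[of m1 k 1]
      dvd_close2[of m2 "k+1" 1] dvd_close2[of m2 k 2] dvd_close2[of m2 k 1] assms(1,2) k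
    by (auto simp: add.assoc)
qed

lemma four_even_aux:
  fixes m1 m2 n :: nat
  assumes "m1 \<ge> 3" "m2 \<ge> 3" "n \<ge> 6" "coprime m1 m2"
    and "m1 dvd n" "m1 dvd (n-2) \<or> m2 dvd (n-2)" "m1 dvd (n-4) \<or> m2 dvd (n-4)" "m1 dvd (n-6) \<or> m2 dvd (n-6)"
  shows False
proof -
  obtain k where k: "n = k + 6" using assms(3) by (metis le_add_diff_inverse2)
  have e: "n - 2 = k + 4" "n - 4 = k + 2" "n - 6 = k" using k by auto
  have H: "m1 dvd k + 6" "m1 dvd (k + 4) \<or> m2 dvd (k + 4)" "m1 dvd (k + 2) \<or> m2 dvd (k + 2)" "m1 dvd k \<or> m2 dvd k"
    using assms(5) k apply simp
    using assms(6) e(1) apply metis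
    using assms(7) e(2) apply metis
    using assms(8) e(3) by metis
  have "\<not> m1 dvd (k + 4)" using dvd_close2[of m1 "k+4" 2, unfolded add.assoc, simplified] H(1) assms(1) by auto
  then have b: "m2 dvd (k + 4)" using H by auto
  have "\<not> m2 dvd (k + 2)" using dvd_close2[of m2 "k+2" 2, unfolded add.assoc, simplified] b assms(2) by auto
  then have c: "m1 dvd (k + 2)" using H by auto
  have "m1 dvd (k + 6) - (k + 2)" using H(1) c by (rule dvd_diff_nat)
  then have m1d: "m1 dvd 4" by simp
  have "\<not> m1 dvd k" using dvd_close2[of m1 k 2] c assms(1) by auto
  then have d: "m2 dvd k" using H by auto
  have "m2 dvd (k + 4) - k" using b d by (rule dvd_diff_nat)
  then have m2d: "m2 dvd 4" by simp
  have "m1 \<le> 4" "m2 \<le> 4" using m1d m2d by (auto intro: dvd_imp_le)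
  then have "m1 = 3 \<or> m1 = 4" "m2 = 3 \<or> m2 = 4" using assms(1,2) by auto
  then have "m1 = 4" "m2 = 4" using m1d m2d by auto
  then show False using assms(4) by simp
qed

lemma key:
  fixes V1 V2 W :: "real poly" and a b :: real and m1 m2 K :: nat
  assumes m: "m1 \<ge> 3" "m2 \<ge> 3" "coprime m1 m2" and K: "K > 6" and a: "a \<noteq> 0"
    and eq: "pcompose V1 (cheb_T m1) + pcompose V2 (cheb_T m2) = pcompose W (pcompose (cheb_T K) [:b, a:])"
    and nc: "degree (pcompose W (pcompose (cheb_T K) [:b, a:])) > 0"
  shows "(a^2 = 1 \<and> b = 0) \<or> a^2 < 1"
proof -
  define L where "L = [:b, a:]"
  define d where "d = degree W"
  define n where "n = d * K"
  have degL: "degree L = 1" using a by (simp add: L_def)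
  have dpos: "d > 0" using nc by (simp add: degree_pcompose d_def)
  have nK: "n \<ge> K" using dpos by (simp add: n_def)
  then have n6: "n > 6" using K by simp
  define c where "c = lead_coeff W / 2^(d-1)"
  have Wnz: "W \<noteq> 0" using dpos d_def by auto
  have cnz: "c \<noteq> 0" using Wnz by (simp add: c_def)
  define g where "g = W - smult c (cheb_T d)"
  have dg: "degree g \<le> d - 1"
  proof (rule degree_le, intro allI impI)
    fix i assume i: "d - 1 < i"
    show "coeff g i = 0"
    proof (cases "i = d")
      case True
      then show ?thesis using dpos lead_cheb[of d] by (simp add: g_def c_def d_def)
    next
      case False
      then have "i > d" using i by simp
      then show ?thesis by (simp add: g_def coeff_eq_0 d_def)
    qed
  qed
  have Wdec: "W = smult c (cheb_T d) + g" by (simp add: g_def)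
  have RHS: "pcompose W (pcompose (cheb_T K) L) = smult c (pcompose (cheb_T n) L) + pcompose g (pcompose (cheb_T K) L)"
    by (subst Wdec) (simp add: pcompose_add pcompose_smult pcompose_assoc cheb_comp n_def)
  have dgc: "degree (pcompose g (pcompose (cheb_T K) L)) \<le> n - K"
  proof -
    have "degree (pcompose g (pcompose (cheb_T K) L)) = degree g * K"
      by (simp add: degree_pcompose degL)
    also have "\<dots> \<le> (d - 1) * K" using dg by simp
    also have "\<dots> = n - K" by (simp add: n_def diff_mult_distrib)
    finally show ?thesis .
  qed
  define P where "P = pcompose V1 (cheb_T m1) + pcompose V2 (cheb_T m2)"
  define E where "E = degree V1 + degree V2 + n + 1"
  define D where "D = m1 * m2 * E"
  have nD: "n \<le> D"
  proof -
    have "n \<le> E" by (simp add: E_def)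
    also have "E \<le> m1 * m2 * E" using m by simp
    finally show ?thesis by (simp add: D_def)
  qed
  have HP: "Hz D P = pcompose (Hz (m2 * E) V1) (monom 1 m1) + pcompose (Hz (m1 * E) V2) (monom 1 m2)"
  proof -
    have "degree V1 \<le> E" by (simp add: E_def)
    also have "E \<le> m2 * E" using m by simp
    finally have d1: "degree V1 \<le> m2 * E" .
    have "degree V2 \<le> E" by (simp add: E_def)
    also have "E \<le> m1 * E" using m by simp
    finally have d2: "degree V2 \<le> m1 * E" .
    have D1: "D = m1 * (m2 * E)" "D = m2 * (m1 * E)" by (simp_all add: D_def mult_ac)
    show ?thesis unfolding P_def Hz_add Hz_cheb[OF D1(1) d1] Hz_cheb[OF D1(2) d2] ..
  qed
  have FA: "coeff (Hz D P) (D - k) = 0" if k: "k \<le> D" "\<not> m1 dvd k" "\<not> m2 dvd k" for k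
  proof -
    have "\<not> m1 dvd (D - k)"
    proof
      assume "m1 dvd (D - k)"
      moreover have "m1 dvd D" by (simp add: D_def)
      ultimately have "m1 dvd D - (D - k)" using dvd_diff_nat by blast
      then show False using k by simp
    qed
    moreover have "\<not> m2 dvd (D - k)"
    proof
      assume "m2 dvd (D - k)"
      moreover have "m2 dvd D" by (simp add: D_def)
      ultimately have "m2 dvd D - (D - k)" using dvd_diff_nat by blast
      then show False using k by simp
    qed
    ultimately show ?thesis unfolding HP by (simp add: coeff_pcompose_monom)
  qed
  have FB: "coeff (Hz D P) (D - n + j) = c * coeff (Gp a b n) j" if j: "j < K" for j
  proof -
    have "Hz D P = smult c (monom 1 (D - n) * Gp a b n) + Hz D (pcompose g (pcompose (cheb_T K) L))"
      unfolding P_def eq[folded L_def] RHS Hz_add Hz_smult Hz_G[OF nD, of b a, folded L_def] ..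
    moreover have "coeff (Hz D (pcompose g (pcompose (cheb_T K) L))) (D - n + j) = 0"
      by (rule Hz_low) (use dgc j nD nK in linarith)
    ultimately show ?thesis using nD by (simp add: coeff_monom_mult)
  qed
  have Z: "coeff (Gp a b n) j = 0" if j: "j < K" "j \<le> n" "\<not> m1 dvd (n - j)" "\<not> m2 dvd (n - j)" for j
  proof -
    have "D - (n - j) = D - n + j" using j nD by simp
    then have "c * coeff (Gp a b n) j = 0" using FA[of "n - j"] FB[of j] j nD by simp
    then show ?thesis using cnz by simp
  qed
  have s1: "Suc (n - 1) = n" "Suc (Suc (n - 2)) = n" "Suc (Suc (Suc (n - 3))) = n" "Suc (Suc (Suc (Suc (n - 4)))) = n"
    using n6 by auto
  have r: "n - 2 + 2 = n" "n - 2 + 1 = n - 1" "n - 3 + 3 = n" "n - 3 + 2 = n - 1" "n - 4 + 4 = n" "n - 4 + 2 = n - 2" "n - 4 + 3 = n - 1"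
    using n6 by auto
  have e0: "coeff (Gp a b n) 0 = a^n/2" using c0[of a b "n-1"] unfolding s1 .
  have e1: "coeff (Gp a b n) 1 = real n * a^(n-1) * b" using c1[of a b "n-1"] unfolding s1 .
  have e2: "2 * a^2 * coeff (Gp a b n) 2 = real n * a^n * (a^2 - 1 + 2 * real (n-1) * b^2)"
    using c2[of a b "n-2"] unfolding s1 r .
  have e4: "b = 0 \<Longrightarrow> 4 * a^4 * coeff (Gp a b n) 4 = real n * a^n * (a^2-1) * (2 + real (n-1) * (a^2-1))"
    using c4[of a "n-3"] unfolding s1 r by simp
  have e6: "b = 0 \<Longrightarrow> 12 * a^6 * coeff (Gp a b n) 6 = real n * a^n * (a^2-1)
      * (6 + 6 * real (n-2) * (a^2-1) + real (n-1) * real (n-2) * (a^2-1)^2)"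
    using c6[of a "n-4"] unfolding s1 r by simp
  have anz: "a^n \<noteq> 0" using a by simp
  have Sn: "m1 dvd n \<or> m2 dvd n"
  proof (rule ccontr)
    assume "\<not> (m1 dvd n \<or> m2 dvd n)"
    then have "coeff (Gp a b n) 0 = 0" using Z[of 0] K by simp
    then show False using e0 anz by simp
  qed
  show ?thesis
  proof (cases "b = 0")
    case False
    have Sn1: "m1 dvd (n-1) \<or> m2 dvd (n-1)"
    proof (rule ccontr)
      assume "\<not> (m1 dvd (n-1) \<or> m2 dvd (n-1))"
      then have "coeff (Gp a b n) 1 = 0" using Z[of 1] K n6 by simp
      then show False using e1 False a n6 by simp
    qed
    have "\<not> (m1 dvd (n-2) \<or> m2 dvd (n-2))"
      using three_consec[of m1 m2 n] m n6 Sn Sn1 by auto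
    then have "coeff (Gp a b n) 2 = 0" using Z[of 2] K n6 by simp
    then have "real n * a^n * (a^2 - 1 + 2 * real (n-1) * b^2) = 0" using e2 by simp
    then have "a^2 - 1 + 2 * real (n-1) * b^2 = 0" using anz n6 by simp
    moreover have "real (n-1) * b^2 > 0" using False n6 by simp
    ultimately show ?thesis by linarith
  next
    case True
    show ?thesis
    proof (cases "a^2 = 1")
      case True then show ?thesis using \<open>b = 0\<close> by simp
    next
      case ne: False
      have Sn2: "m1 dvd (n-2) \<or> m2 dvd (n-2)"
      proof (rule ccontr)
        assume "\<not> (m1 dvd (n-2) \<or> m2 dvd (n-2))"
        then have "coeff (Gp a b n) 2 = 0" using Z[of 2] K n6 by simp
        then have "real n * a^n * (a^2 - 1) = 0" using e2 \<open>b = 0\<close> by simp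
        then show False using anz ne n6 by simp
      qed
      have four: "\<not> (m1 dvd (n-4) \<or> m2 dvd (n-4)) \<or> \<not> (m1 dvd (n-6) \<or> m2 dvd (n-6))"
      proof (rule ccontr)
        assume H: "\<not> ?thesis"
        show False
        proof (cases "m1 dvd n")
          case True
          then show False using four_even_aux[of m1 m2 n] m n6 Sn2 H by auto
        next
          case False
          then have "m2 dvd n" using Sn by auto
          then show False using four_even_aux[of m2 m1 n] m n6 Sn2 H by (auto simp: coprime_commute)
        qed
      qed
      have em: "a^2 - 1 \<noteq> 0" using ne by simp
      show ?thesis
      proof (cases "m1 dvd (n-4) \<or> m2 dvd (n-4)")
        case False
        then have "coeff (Gp a b n) 4 = 0" using Z[of 4] K n6 by simp
        then have "real n * a^n * (a^2-1) * (2 + real (n-1) * (a^2-1)) = 0" using e4 \<open>b = 0\<close> by simp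
        then have h: "2 + real (n-1) * (a^2-1) = 0" using anz em n6 by simp
        have "a^2 - 1 < 0"
        proof (rule ccontr)
          assume "\<not> a^2 - 1 < 0"
          then have "real (n-1) * (a^2-1) \<ge> 0" by simp
          then show False using h by linarith
        qed
        then show ?thesis by simp
      next
        case True
        then have F: "\<not> (m1 dvd (n-6) \<or> m2 dvd (n-6))" using four by auto
        then have "coeff (Gp a b n) 6 = 0" using Z[of 6] K n6 by simp
        then have "real n * a^n * (a^2-1) * (6 + 6 * real (n-2) * (a^2-1) + real (n-1) * real (n-2) * (a^2-1)^2) = 0"
          using e6 \<open>b = 0\<close> by simp
        then have h: "6 + 6 * real (n-2) * (a^2-1) + real (n-1) * real (n-2) * (a^2-1)^2 = 0"
          using anz em n6 by simp
        have "a^2 - 1 < 0"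
        proof (rule ccontr)
          assume "\<not> a^2 - 1 < 0"
          then have "6 * real (n-2) * (a^2-1) \<ge> 0" "real (n-1) * real (n-2) * (a^2-1)^2 \<ge> 0" by simp_all
          then show False using h by linarith
        qed
        then show ?thesis by simp
      qed
    qed
  qed
qed

theorem proposition3p1:
  fixes V1 V2 U V1' V2' U' :: "real poly" and \<alpha> \<beta> :: real
    and m1 m2 m1' m2' :: nat
  assumes "\<alpha> \<noteq> 0"
    and "m1 \<ge> 3" "m2 \<ge> 3" "m1' \<ge> 3" "m2' \<ge> 3"
    and "coprime m1 m2" "coprime m1' m2'"
    and eq1: "pcompose V1 (cheb_T m1) + pcompose V2 (cheb_T m2)
              = pcompose U' (pcompose (cheb_T (m1' * m2')) [:\<beta>, \<alpha>:])"
    and eq2: "pcompose V1' (pcompose (cheb_T m1') [:\<beta>, \<alpha>:])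
              + pcompose V2' (pcompose (cheb_T m2') [:\<beta>, \<alpha>:])
              = pcompose U (cheb_T (m1 * m2))"
    and nc1: "degree (pcompose V1 (cheb_T m1) + pcompose V2 (cheb_T m2)) > 0"
    and nc2: "degree (pcompose U (cheb_T (m1 * m2))) > 0"
  shows "(\<alpha> = 1 \<or> \<alpha> = -1) \<and> \<beta> = 0"
proof -
  have K1: "m1' * m2' > 6"
  proof -
    have "3 * 3 \<le> m1' * m2'" using assms(4,5) by (intro mult_le_mono) auto
    then show ?thesis by simp
  qed
  have K2: "m1 * m2 > 6"
  proof -
    have "3 * 3 \<le> m1 * m2" using assms(2,3) by (intro mult_le_mono) auto
    then show ?thesis by simp
  qed
  have k1: "(\<alpha>^2 = 1 \<and> \<beta> = 0) \<or> \<alpha>^2 < 1"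
    using key[OF assms(2,3,6) K1 assms(1) eq1] nc1 eq1 by simp
  define R where "R = pcompose V1' (cheb_T m1') + pcompose V2' (cheb_T m2')"
  define Li where "Li = [:- \<beta> / \<alpha>, 1 / \<alpha>:]"
  have LLi: "pcompose [:\<beta>, \<alpha>:] Li = [:0, 1:]"
    using assms(1) by (simp add: Li_def pcompose_pCons)
  have RL: "pcompose R [:\<beta>, \<alpha>:] = pcompose U (cheb_T (m1 * m2))"
    unfolding R_def pcompose_add pcompose_assoc[symmetric] using eq2 .
  have "R = pcompose (pcompose R [:\<beta>, \<alpha>:]) Li"
    by (simp add: pcompose_assoc[symmetric] LLi)
  also have "\<dots> = pcompose U (pcompose (cheb_T (m1 * m2)) Li)"
    by (simp add: RL pcompose_assoc)
  finally have eq2': "pcompose V1' (cheb_T m1') + pcompose V2' (cheb_T m2') = pcompose U (pcompose (cheb_T (m1 * m2)) [:- \<beta> / \<alpha>, 1 / \<alpha>:])"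
    by (simp add: R_def Li_def)
  have nc2': "degree (pcompose U (pcompose (cheb_T (m1 * m2)) [:- \<beta> / \<alpha>, 1 / \<alpha>:])) > 0"
    using nc2 assms(1) by (simp add: degree_pcompose)
  have ia: "1 / \<alpha> \<noteq> 0" using assms(1) by simp
  have k2: "((1/\<alpha>)^2 = 1 \<and> - \<beta> / \<alpha> = 0) \<or> (1/\<alpha>)^2 < 1"
    using key[OF assms(4,5,7) K2 ia eq2' nc2'] .
  have apos: "\<alpha>^2 > 0" using assms(1) by simp
  show ?thesis
  proof (cases "\<alpha>^2 = 1 \<and> \<beta> = 0")
    case True
    then show ?thesis by (simp add: power2_eq_1_iff)
  next
    case False
    then have lt: "\<alpha>^2 < 1" using k1 by auto
    have "(1/\<alpha>)^2 = 1 / \<alpha>^2" by (simp add: power_divide)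
    moreover have "1 / \<alpha>^2 > 1" using lt apos by simp
    ultimately show ?thesis using k2 by auto
  qed
qed

end
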